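(* Define $\sigma:\mathbb{R}\to\mathbb{R}$ by $\sigma(x)=-1$ for $x\in(-1,0]$, $\sigma(x)=1$ for $x\in(0,1]$, and recursively, for every integer $n\ge0$, $$\sigma(x)=\sigma(x+2\cdot3^n)-\frac1{(n+1)^2}\ \text{ for }x\in(-3^{n+1},-3^n],\qquad \sigma(x)=\sigma(x-2\cdot3^n)+\frac1{(n+1)^2}\ \text{ for }x\in(3^n,3^{n+1}].$$ Then for every $x\ge1$, $$\int_0^x\sigma(t)\,dt\ \ge\ \frac{x}{2(\log_3x+1)^2}.$$ *)

theory Defs
  imports "HOL-Analysis.Analysis"
begin

text \<open>These clauses
  determine sigma uniquely on all of the reals (the intervals (-1,0], (0,1],
  (-3^(n+1),-3^n], (3^n,3^(n+1]] partition the real line, and the recursive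
  clauses refer to strictly lower levels).\<close>
definition sigma_spec :: "(real \<Rightarrow> real) \<Rightarrow> bool" where
  "sigma_spec \<sigma> \<longleftrightarrow>
     (\<forall>x. -1 < x \<and> x \<le> 0 \<longrightarrow> \<sigma> x = -1) \<and>
     (\<forall>x. 0 < x \<and> x \<le> 1 \<longrightarrow> \<sigma> x = 1) \<and>
     (\<forall>n::nat. \<forall>x. - ((3::real)^(n+1)) < x \<and> x \<le> -(3^n) \<longrightarrow>
         \<sigma> x = \<sigma> (x + 2 * 3^n) - 1 / (real n + 1)^2) \<and>
     (\<forall>n::nat. \<forall>x. (3::real)^n < x \<and> x \<le> 3^(n+1) \<longrightarrow>
         \<sigma> x = \<sigma> (x - 2 * 3^n) + 1 / (real n + 1)^2)"

end

theory Submission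
  imports Defs
begin

lemma negl_Ints: "negligible (\<int> :: real set)"
proof -
  have "\<int> = \<Union> ((\<lambda>x. {x}) ` (\<int>::real set))" by auto
  moreover have "negligible (\<Union> ((\<lambda>x. {x}) ` (\<int>::real set)))"
    by (rule negligible_countable_Union) (auto simp: countable_int)
  ultimately show ?thesis by simp
qed

lemma shift_int:
  fixes f :: "real \<Rightarrow> real"
  assumes "f integrable_on {a+c..b+c}"
  shows "integral {a..b} (\<lambda>t. f (c + t)) = integral {a+c..b+c} f"
    and "(\<lambda>t. f (c + t)) integrable_on {a..b}"
proof -
  have "((f \<circ> (+) c) has_integral integral {a+c..b+c} f) {a..b}"
    using has_integral_shift_Icc_real assms by blast
  then show "integral {a..b} (\<lambda>t. f (c + t)) = integral {a+c..b+c} f"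
    "(\<lambda>t. f (c + t)) integrable_on {a..b}"
    by (auto simp: o_def integral_unique)
qed

context
  fixes \<sigma> :: "real \<Rightarrow> real"
  assumes S: "sigma_spec \<sigma>"
begin

lemma s1: "-1 < x \<Longrightarrow> x \<le> 0 \<Longrightarrow> \<sigma> x = -1"
  using S unfolding sigma_spec_def by blast
lemma s2: "0 < x \<Longrightarrow> x \<le> 1 \<Longrightarrow> \<sigma> x = 1"
  using S unfolding sigma_spec_def by blast
lemma s3: "- ((3::real)^(n+1)) < x \<Longrightarrow> x \<le> -(3^n) \<Longrightarrow>
         \<sigma> x = \<sigma> (x + 2 * 3^n) - 1 / (real n + 1)^2"
  using S unfolding sigma_spec_def by blast
lemma s4: "(3::real)^n < x \<Longrightarrow> x \<le> 3^(n+1) \<Longrightarrow>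
         \<sigma> x = \<sigma> (x - 2 * 3^n) + 1 / (real n + 1)^2"
  using S unfolding sigma_spec_def by blast

lemma antisym_n: "\<bar>t\<bar> < (3::real)^n \<Longrightarrow> t \<notin> \<int> \<Longrightarrow> \<sigma> (-t) = - \<sigma> t"
proof (induction n arbitrary: t)
  case 0
  then have "t \<noteq> 0" by auto
  then show ?case using 0 s1 s2 by (cases "t > 0") auto
next
  case (Suc n)
  have i3: "(3::real)^n \<in> \<int>" by simp
  show ?case
  proof (cases "\<bar>t\<bar> < 3^n")
    case True then show ?thesis using Suc by blast
  next
    case False
    have ne: "t \<noteq> 3^n" "t \<noteq> -(3^n)" using Suc.prems(2) i3 by auto
    show ?thesis
    proof (cases "t > 0")
      case True
      then have t: "3^n < t" "t < 3^(n+1)" using False ne Suc.prems(1) by auto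
      have ni: "t - 2*3^n \<notin> \<int>"
      proof
        assume "t - 2*3^n \<in> \<int>"
        then have "(t - 2*3^n) + 2*3^n \<in> \<int>" using i3 by (intro Ints_add) auto
        then show False using Suc.prems(2) by simp
      qed
      have ab: "\<bar>t - 2*3^n\<bar> < 3^n" using t by auto
      have "\<sigma> t = \<sigma> (t - 2 * 3^n) + 1 / (real n + 1)^2" using s4[of n t] t by auto
      moreover have "\<sigma> (-t) = \<sigma> (-t + 2 * 3^n) - 1 / (real n + 1)^2" using s3[of n "-t"] t by auto
      moreover have "\<sigma> (-(t - 2*3^n)) = - \<sigma> (t - 2*3^n)" using Suc.IH[OF ab ni] .
      ultimately show ?thesis by (simp add: algebra_simps)
    next
      case False': False
      then have t: "-(3^(n+1)) < t" "t < -(3^n)" using False ne Suc.prems(1) by auto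
      have ni: "t + 2*3^n \<notin> \<int>"
      proof
        assume "t + 2*3^n \<in> \<int>"
        then have "(t + 2*3^n) - 2*3^n \<in> \<int>" using i3 by (intro Ints_diff) auto
        then show False using Suc.prems(2) by simp
      qed
      have ab: "\<bar>t + 2*3^n\<bar> < 3^n" using t by auto
      have "\<sigma> t = \<sigma> (t + 2 * 3^n) - 1 / (real n + 1)^2" using s3[of n t] t by auto
      moreover have "\<sigma> (-t) = \<sigma> (-t - 2 * 3^n) + 1 / (real n + 1)^2" using s4[of n "-t"] t by auto
      moreover have "\<sigma> (-(t + 2*3^n)) = - \<sigma> (t + 2*3^n)" using Suc.IH[OF ab ni] .
      ultimately show ?thesis by (simp add: algebra_simps)
    qed
  qed
qed

lemma antisym: "t \<notin> \<int> \<Longrightarrow> \<sigma> (-t) = - \<sigma> t"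
proof -
  assume "t \<notin> \<int>"
  obtain n where "\<bar>t\<bar> < (3::real)^n" using real_arch_pow[of 3 "\<bar>t\<bar>"] by auto
  then show ?thesis using antisym_n \<open>t \<notin> \<int>\<close> by blast
qed

lemma integrable_n: "\<sigma> integrable_on {-(3^n)..(3::real)^n}"
proof (induction n)
  case 0
  have a: "\<sigma> integrable_on {-1..0}"
    by (rule integrable_spike_finite[where S="{-1}" and f="\<lambda>_. -1"]) (auto simp: s1 integrable_const_ivl)
  have b: "\<sigma> integrable_on {0..1}"
    by (rule integrable_spike_finite[where S="{0}" and f="\<lambda>_. 1"]) (auto simp: s2 integrable_const_ivl)
  show ?case using Henstock_Kurzweil_Integration.integrable_combine[OF _ _ a b] by simp
next
  case (Suc n)
  define a :: real where "a = 3^n"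
  have a0: "a > 0" by (simp add: a_def)
  have p: "(3::real)^Suc n = 3 * a" by (simp add: a_def)
  have IH: "\<sigma> integrable_on {-a..a}" using Suc.IH by (simp add: a_def)
  have L0: "(\<lambda>t. \<sigma> (2*a + t)) integrable_on {-(3*a)..-a}"
    using shift_int(2)[of \<sigma> "-(3*a)" "2*a" "-a"] IH by simp
  have L: "\<sigma> integrable_on {-(3*a)..-a}"
    apply (rule integrable_spike_finite[where S="{-(3*a)}" and f="\<lambda>t. \<sigma> (2*a + t) - 1 / (real n + 1)^2"])
    using s3[of n] p L0 by (auto simp: a_def add.commute intro!: integrable_diff)
  have R0: "(\<lambda>t. \<sigma> (-2*a + t)) integrable_on {a..3*a}"
    using shift_int(2)[of \<sigma> "a" "-2*a" "3*a"] IH by simp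
  have R: "\<sigma> integrable_on {a..3*a}"
    apply (rule integrable_spike_finite[where S="{a}" and f="\<lambda>t. \<sigma> (-2*a + t) + 1 / (real n + 1)^2"])
    using s4[of n] p R0 by (auto simp: a_def intro!: integrable_add)
  have "\<sigma> integrable_on {-(3*a)..a}" using Henstock_Kurzweil_Integration.integrable_combine[OF _ _ L IH] a0 by simp
  then have "\<sigma> integrable_on {-(3*a)..3*a}" using Henstock_Kurzweil_Integration.integrable_combine[OF _ _ _ R] a0 by simp
  then show ?case using p by simp
qed

lemma integrable_sub: "-(3^n) \<le> a \<Longrightarrow> b \<le> (3::real)^n \<Longrightarrow> \<sigma> integrable_on {a..b}"
  by (rule integrable_subinterval_real[OF integrable_n]) auto


lemma F_small: "0 \<le> z \<Longrightarrow> z \<le> 1 \<Longrightarrow> integral {0..z} \<sigma> = z"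
proof -
  assume z: "0 \<le> z" "z \<le> 1"
  have "integral {0..z} \<sigma> = integral {0..z} (\<lambda>_. 1::real)"
    by (rule integral_spike[where S="{0}"]) (use z in \<open>auto simp: s2\<close>)
  then show ?thesis using z by simp
qed

lemma F_anti: "integral {-z..0} \<sigma> = - integral {0..z} \<sigma>"
proof -
  have "integral {-z..0} \<sigma> = integral {0..z} (\<lambda>x. \<sigma> (-x))"
    using Henstock_Kurzweil_Integration.integral_reflect_real[of 0 "-z" \<sigma>] by simp
  also have "\<dots> = integral {0..z} (\<lambda>x. - \<sigma> x)"
    by (rule integral_spike[where S="\<int>"]) (auto simp: negl_Ints antisym)
  finally show ?thesis by (simp add: integral_neg)
qed

lemma F_rec:
  assumes x: "(3::real)^n < x" "x \<le> 3^(n+1)"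
  shows "integral {0..x} \<sigma> = integral {0..\<bar>x - 2*3^n\<bar>} \<sigma> + (x - 3^n) / (real n + 1)^2"
proof -
  define a :: real where "a = 3^n"
  define c :: real where "c = 1 / (real n + 1)^2"
  have a0: "a > 0" by (simp add: a_def)
  have p: "(3::real)^(n+1) = 3 * a" by (simp add: a_def)
  have xa: "a < x" "x \<le> 3*a" using x p by (auto simp: a_def)
  have I: "\<sigma> integrable_on {u..v}" if "-(3*a) \<le> u" "v \<le> 3*a" for u v
    using integrable_sub[of "n+1" u v] that p by simp
  have "integral {0..x} \<sigma> = integral {0..a} \<sigma> + integral {a..x} \<sigma>"
    using Henstock_Kurzweil_Integration.integral_combine[of 0 a x \<sigma>] I[of 0 x] xa a0 by simp
  moreover have "integral {a..x} \<sigma> = integral {a..x} (\<lambda>t. \<sigma> (-2*a + t) + c)"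
  proof (rule integral_spike[where S="{a}"])
    fix t assume "t \<in> {a..x} - {a}"
    then have "3^n < t" "t \<le> 3^(n+1)" using xa p by (auto simp: a_def)
    from s4[OF this] show "\<sigma> (-2*a + t) + c = \<sigma> t" by (simp add: a_def c_def)
  qed simp
  moreover have IH: "\<sigma> integrable_on {-a..x-2*a}" using I xa a0 by auto
  moreover have "integral {a..x} (\<lambda>t. \<sigma> (-2*a + t) + c) = integral {-a..x-2*a} \<sigma> + c * (x - a)"
    using shift_int[of \<sigma> a "-2*a" x] IH xa
    by (subst integral_add) (auto simp: integrable_const_ivl)
  moreover have "integral {-a..x-2*a} \<sigma> = - integral {0..a} \<sigma> + integral {0..\<bar>x - 2*a\<bar>} \<sigma>"
  proof (cases "x - 2*a \<ge> 0")
    case True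
    then have "integral {-a..x-2*a} \<sigma> = integral {-a..0} \<sigma> + integral {0..x-2*a} \<sigma>"
      using Henstock_Kurzweil_Integration.integral_combine[of "-a" 0 "x-2*a" \<sigma>] IH a0 by simp
    then show ?thesis using True F_anti by simp
  next
    case False
    then have "integral {-a..0} \<sigma> = integral {-a..x-2*a} \<sigma> + integral {x-2*a..0} \<sigma>"
      using Henstock_Kurzweil_Integration.integral_combine[of "-a" "x-2*a" 0 \<sigma>] I[of "-a" 0] a0 xa by simp
    moreover have "integral {x-2*a..0} \<sigma> = - integral {0..2*a-x} \<sigma>"
      using F_anti[of "2*a-x"] by simp
    ultimately show ?thesis using False F_anti[of a] by simp
  qed
  ultimately show ?thesis by (simp add: a_def c_def)
qed


lemma Mp:
  assumes M: "\<And>z. 0 \<le> z \<Longrightarrow> z \<le> (3::real)^n \<Longrightarrow> z \<le> 2*(real n+1)^2 * integral {0..z} \<sigma>"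
    and x: "(3::real)^n < x" "x \<le> 3^(n+1)"
  shows "x \<le> 2*(real n+1)^2 * integral {0..x} \<sigma>"
proof -
  define k :: real where "k = (real n + 1)^2"
  have k0: "k > 0" by (simp add: k_def)
  define y where "y = \<bar>x - 2*3^n\<bar>"
  have y: "0 \<le> y" "y \<le> 3^n" "y \<ge> 2*3^n - x" using x by (auto simp: y_def)
  have Fy: "y \<le> 2 * k * integral {0..y} \<sigma>" using M[OF y(1,2)] by (simp add: k_def)
  have Fx: "integral {0..x} \<sigma> = integral {0..y} \<sigma> + (x - 3^n) / k"
    using F_rec[OF x] by (simp add: y_def k_def)
  have "2 * k * integral {0..x} \<sigma> = 2 * k * integral {0..y} \<sigma> + 2 * (x - 3^n)"
    using k0 by (simp add: Fx field_simps)
  then show ?thesis using Fy y by (simp add: k_def)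
qed

lemma M: "0 \<le> z \<Longrightarrow> z \<le> (3::real)^n \<Longrightarrow> z \<le> 2*(real n+1)^2 * integral {0..z} \<sigma>"
proof (induction n arbitrary: z)
  case 0
  then show ?case using F_small[of z] by simp
next
  case (Suc n)
  show ?case
  proof (cases "z \<le> 3^n")
    case True
    have h: "z \<le> 2*(real n+1)^2 * integral {0..z} \<sigma>" using Suc.IH[OF Suc.prems(1) True] .
    have "0 \<le> integral {0..z} \<sigma>"
    proof (rule ccontr)
      assume "\<not> ?thesis"
      then have "2*(real n+1)^2 * integral {0..z} \<sigma> < 0"
        by (simp add: mult_pos_neg)
      then show False using h Suc.prems(1) by linarith
    qed
    moreover have "2*(real n+1)^2 \<le> 2*(real (Suc n)+1)^2" by (simp add: power_mono)
    ultimately have "2*(real n+1)^2 * integral {0..z} \<sigma> \<le> 2*(real (Suc n)+1)^2 * integral {0..z} \<sigma>"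
      by (rule mult_right_mono[rotated])
    then show ?thesis using h by linarith
  next
    case False
    then have h: "z \<le> 2*(real n+1)^2 * integral {0..z} \<sigma>"
      using Mp[OF Suc.IH, of z] Suc.prems by simp
    then have "0 \<le> integral {0..z} \<sigma>"
      using False by (smt (verit) mult_nonneg_nonpos zero_le_power2 zero_less_power)
    moreover have "2*(real n+1)^2 \<le> 2*(real (Suc n)+1)^2" by (simp add: power_mono)
    ultimately have "2*(real n+1)^2 * integral {0..z} \<sigma> \<le> 2*(real (Suc n)+1)^2 * integral {0..z} \<sigma>"
      by (rule mult_right_mono[rotated])
    then show ?thesis using h by linarith
  qed
qed

end

theorem mainTheorem5:
  fixes \<sigma> :: "real \<Rightarrow> real" and x :: real
  assumes "sigma_spec \<sigma>"
    and "x \<ge> 1"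
  shows "integral {0..x} \<sigma> \<ge> x / (2 * (log 3 x + 1)^2)"
proof (cases "x = 1")
  case True
  then show ?thesis using F_small[OF assms(1), of 1] by simp
next
  case False
  then have x1: "x > 1" using assms(2) by simp
  obtain m where m: "x \<le> (3::real)^m" using real_arch_pow[of 3 x] by (auto intro: less_imp_le)
  define l where "l = (LEAST m. x \<le> (3::real)^m)"
  have l1: "x \<le> 3^l" unfolding l_def using m by (rule LeastI)
  have l0: "l \<noteq> 0" using l1 x1 by (metis not_le power_0)
  then obtain n where n: "l = Suc n" using not0_implies_Suc by blast
  have "\<not> x \<le> 3^n" using n Least_le[of "\<lambda>m. x \<le> (3::real)^m" n] unfolding l_def by auto
  then have xn: "3^n < x" "x \<le> 3^(n+1)" using l1 n by auto
  have h: "x \<le> 2*(real n+1)^2 * integral {0..x} \<sigma>"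
    using Mp[OF assms(1) M[OF assms(1)] xn] by simp
  have "real n < log 3 x" using xn(1) x1
    by (subst less_log_iff) (auto simp: powr_realpow)
  then have "(real n + 1)^2 \<le> (log 3 x + 1)^2" by (intro power_mono) auto
  then have "2*(real n+1)^2 \<le> 2*(log 3 x + 1)^2" by simp
  moreover have pos: "0 < 2*(real n+1)^2" by simp
  ultimately have "x / (2 * (log 3 x + 1)^2) \<le> x / (2*(real n+1)^2)"
    using x1 by (intro divide_left_mono) auto
  also have "\<dots> \<le> integral {0..x} \<sigma>" using h pos by (simp add: divide_le_eq mult.commute)
  finally show ?thesis .
qed

end
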